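(* Let $F$ be a field with valuation $v:F\to\mathbb{R}\cup\{\infty\}$ whose value group $v(F\setminus\{0\})$ is a proper dense subgroup of $\mathbb{R}$, and let $R=\{x\in F:v(x)\ge0\}$. Let $\alpha\in\mathbb{R}_{\ge0}$ with $\alpha\notin v(R\setminus\{0\})$, let $(\alpha_n)_{n\in\mathbb{N}}$ be a sequence in $v(R\setminus\{0\})$ with $\alpha_n\ge\alpha_{n+1}>\alpha$ for all $n$ and $\alpha_n\to\alpha$, choose $r_n\in R$ with $v(r_n)=\alpha_n$, put $f=\sum_n r_nX^n\in R[[X]]$, and let $r\in R$ with $v(r)>\alpha$. Then the finitely generated ideal $J=R[[X]]f+R[[X]]r$ of $R[[X]]$ is not finitely presented. In particular $R[[X]]$ is not a coherent ring.
   Context: A ring is coherent if every finitely generated ideal is finitely presented, i.e. admits an exact sequence $S^m\to S^n\to J\to0$ with $m,n\in\mathbb{N}$. *)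

theory Defs
  imports "HOL-Analysis.Analysis" "HOL-Computational_Algebra.Formal_Power_Series"
begin

definition is_valuation :: "('a::field \<Rightarrow> ereal) \<Rightarrow> bool" where
  "is_valuation v \<longleftrightarrow>
     (\<forall>x. v x = \<infinity> \<longleftrightarrow> x = 0) \<and> (\<forall>x. v x \<noteq> -\<infinity>) \<and>
     (\<forall>x y. v (x * y) = v x + v y) \<and>
     (\<forall>x y. min (v x) (v y) \<le> v (x + y))"

definition value_group :: "('a::field \<Rightarrow> ereal) \<Rightarrow> real set" where
  "value_group v = {real_of_ereal (v x) | x. x \<noteq> 0}"

definition dense_in_reals :: "real set \<Rightarrow> bool" where
  "dense_in_reals G \<longleftrightarrow> (\<forall>a b. a < b \<longrightarrow> (\<exists>g\<in>G. a < g \<and> g < b))"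

definition val_ring :: "('a::field \<Rightarrow> ereal) \<Rightarrow> 'a set" where
  "val_ring v = {x. 0 \<le> v x}"

definition fps_ring :: "'a::comm_ring_1 set \<Rightarrow> 'a fps set" where
  "fps_ring R = {g. \<forall>n. fps_nth g n \<in> R}"

text \<open>Module-theoretic notions over a commutative ring given as a subring S of an
  ambient commutative ring type. Elements of S^n are functions nat \<Rightarrow> 'b with
  entries in S on {..<n}.\<close>

definition span_in :: "'b::comm_ring_1 set \<Rightarrow> nat \<Rightarrow> (nat \<Rightarrow> 'b) \<Rightarrow> 'b set" where
  "span_in S n g = {(\<Sum>i<n. c i * g i) | c. \<forall>i<n. c i \<in> S}"

definition fin_gen_ideal :: "'b::comm_ring_1 set \<Rightarrow> 'b set \<Rightarrow> bool" where
  "fin_gen_ideal S J \<longleftrightarrow> (\<exists>n g. (\<forall>i<n. g i \<in> S) \<and> J = span_in S n g)"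

text \<open>J is finitely presented: there is an exact sequence S^m \<rightarrow> S^n \<rightarrow> J \<rightarrow> 0.
  The map S^n \<rightarrow> J sends e_i to g_i (surjectivity: the g_i generate J), and
  S^m \<rightarrow> S^n sends e_j to k_j; exactness at S^n says its image is the kernel.\<close>
definition finitely_presented_ideal :: "'b::comm_ring_1 set \<Rightarrow> 'b set \<Rightarrow> bool" where
  "finitely_presented_ideal S J \<longleftrightarrow>
    (\<exists>n g. (\<forall>i<n. g i \<in> S) \<and> J = span_in S n g \<and>
      (\<exists>m (k :: nat \<Rightarrow> nat \<Rightarrow> 'b). (\<forall>j<m. \<forall>i<n. k j i \<in> S) \<and>
         {c :: nat \<Rightarrow> 'b. (\<forall>i<n. c i \<in> S) \<and> (\<forall>i\<ge>n. c i = 0) \<and> (\<Sum>i<n. c i * g i) = 0}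
         = {(\<lambda>i. if i < n then (\<Sum>j<m. d j * k j i) else 0) | d :: nat \<Rightarrow> 'b. \<forall>j<m. d j \<in> S}))"

definition coherent_ring :: "'b::comm_ring_1 set \<Rightarrow> bool" where
  "coherent_ring S \<longleftrightarrow> (\<forall>J. fin_gen_ideal S J \<longrightarrow> finitely_presented_ideal S J)"

end

theory Submission
  imports Defs
begin


lemma sum_delta_mult:
  fixes F :: "nat \<Rightarrow> 'b::comm_ring_1"
  assumes "finite A" "j \<in> A"
  shows "(\<Sum>j'\<in>A. (if j' = j then 1 else 0) * F j') = F j"
proof -
  have "(\<Sum>j'\<in>A. (if j' = j then 1 else 0) * F j') = (\<Sum>j'\<in>A. if j' = j then F j' else 0)"
    by (rule sum.cong) auto
  also have "\<dots> = F j" using assms by simp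
  finally show ?thesis .
qed

lemma schanuel_aux:
  fixes S :: "'b::comm_ring_1 set" and f rr :: 'b
  assumes add: "\<And>x y. x \<in> S \<Longrightarrow> y \<in> S \<Longrightarrow> x + y \<in> S"
    and mul: "\<And>x y. x \<in> S \<Longrightarrow> y \<in> S \<Longrightarrow> x * y \<in> S"
    and neg: "\<And>x. x \<in> S \<Longrightarrow> - x \<in> S"
    and zero: "0 \<in> S" and one: "1 \<in> S"
    and fS: "f \<in> S" and rS: "rr \<in> S"
    and fp: "finitely_presented_ideal S {x * f + y * rr | x y. x \<in> S \<and> y \<in> S}"
  shows "\<exists>(M::nat) h. (\<forall>j<M. h j \<in> S \<and> (\<exists>b\<in>S. h j * f + b * rr = 0)) \<and>
     (\<forall>a\<in>S. (\<exists>b\<in>S. a * f + b * rr = 0) \<longrightarrow> (\<exists>s. (\<forall>j<M. s j \<in> S) \<and> a = (\<Sum>j<M. s j * h j)))"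
proof -
  have sumS: "(\<Sum>i\<in>A. F i) \<in> S" if "finite A" "\<And>i. i \<in> A \<Longrightarrow> F i \<in> S" for A and F :: "nat \<Rightarrow> 'b"
    using that by (induction A rule: finite_induct) (auto intro: add zero)
  obtain n g m k where gS: "\<forall>i<n. g i \<in> S" and J: "{x * f + y * rr | x y. x \<in> S \<and> y \<in> S} = span_in S n g"
    and kS: "\<forall>j<m. \<forall>i<n. k j i \<in> S"
    and ker: "{c :: nat \<Rightarrow> 'b. (\<forall>i<n. c i \<in> S) \<and> (\<forall>i\<ge>n. c i = 0) \<and> (\<Sum>i<n. c i * g i) = 0}
         = {(\<lambda>i. if i < n then (\<Sum>j<m. d j * k j i) else 0) | d :: nat \<Rightarrow> 'b. \<forall>j<m. d j \<in> S}"
    using fp unfolding finitely_presented_ideal_def by (elim exE conjE) (rule that; assumption)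
  have "f \<in> span_in S n g" unfolding J[symmetric] using one zero fS by force
  then obtain u where uS: "\<forall>i<n. u i \<in> S" and fu: "f = (\<Sum>i<n. u i * g i)" unfolding span_in_def by blast
  have "rr \<in> span_in S n g" unfolding J[symmetric] using one zero rS by force
  then obtain w where wS: "\<forall>i<n. w i \<in> S" and rw: "rr = (\<Sum>i<n. w i * g i)" unfolding span_in_def by blast
  have "\<forall>i. \<exists>pq. i < n \<longrightarrow> fst pq \<in> S \<and> snd pq \<in> S \<and> g i = fst pq * f + snd pq * rr"
  proof
    fix i
    show "\<exists>pq. i < n \<longrightarrow> fst pq \<in> S \<and> snd pq \<in> S \<and> g i = fst pq * f + snd pq * rr"
    proof (cases "i < n")
      case True
      have "g i \<in> span_in S n g" unfolding span_in_def
        by (rule CollectI, rule exI[of _ "\<lambda>j. if j = i then 1 else 0"]) (use True one zero in \<open>auto simp: sum_delta_mult\<close>)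
      then have "g i \<in> {x * f + y * rr | x y. x \<in> S \<and> y \<in> S}" using J by simp
      then show ?thesis by force
    qed auto
  qed
  then obtain pq where pq: "\<And>i. i < n \<Longrightarrow> fst (pq i) \<in> S \<and> snd (pq i) \<in> S \<and> g i = fst (pq i) * f + snd (pq i) * rr"
    by metis
  define p where "p i = fst (pq i)" for i
  define q where "q i = snd (pq i)" for i
  have pS: "\<And>i. i < n \<Longrightarrow> p i \<in> S" and qS: "\<And>i. i < n \<Longrightarrow> q i \<in> S"
    and gpq: "\<And>i. i < n \<Longrightarrow> g i = p i * f + q i * rr" using pq p_def q_def by auto
  have comb: "(\<Sum>i<n. c i * g i) = (\<Sum>i<n. c i * p i) * f + (\<Sum>i<n. c i * q i) * rr" for c
  proof -
    have "(\<Sum>i<n. c i * g i) = (\<Sum>i<n. c i * p i * f + c i * q i * rr)"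
      by (rule sum.cong) (auto simp: gpq algebra_simps)
    also have "\<dots> = (\<Sum>i<n. c i * p i) * f + (\<Sum>i<n. c i * q i) * rr"
      by (simp add: sum.distrib sum_distrib_right)
    finally show ?thesis .
  qed
  define h where "h j = (if j < m then (\<Sum>i<n. k j i * p i) else if j = m then 1 - (\<Sum>i<n. u i * p i)
      else (\<Sum>i<n. w i * p i))" for j
  have hS: "h j \<in> S" if "j < m + 2" for j
  proof -
    have "(\<Sum>i<n. k j i * p i) \<in> S" if "j < m" using that kS pS by (auto intro!: sumS mul)
    moreover have "(\<Sum>i<n. u i * p i) \<in> S" using uS pS by (auto intro!: sumS mul)
    moreover have "(\<Sum>i<n. w i * p i) \<in> S" using wS pS by (auto intro!: sumS mul)
    moreover have "x \<in> S \<Longrightarrow> 1 - x \<in> S" for x using add[OF one neg[of x]] by simp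
    ultimately show ?thesis unfolding h_def by auto
  qed
  have hI: "\<exists>b\<in>S. h j * f + b * rr = 0" if jM: "j < m + 2" for j
  proof -
    consider "j < m" | "j = m" | "j = m + 1" using jM by (cases "j < m"; cases "j = m") auto
    then show ?thesis
    proof cases
      case 1
      let ?c = "\<lambda>i. if i < n then (\<Sum>j'<m. (if j' = j then 1 else 0) * k j' i) else 0"
      have "?c \<in> {(\<lambda>i. if i < n then (\<Sum>j<m. d j * k j i) else 0) | d :: nat \<Rightarrow> 'b. \<forall>j<m. d j \<in> S}"
        using one zero by (intro CollectI exI[of _ "\<lambda>j'. if j' = j then 1 else 0"]) auto
      then have "?c \<in> {c :: nat \<Rightarrow> 'b. (\<forall>i<n. c i \<in> S) \<and> (\<forall>i\<ge>n. c i = 0) \<and> (\<Sum>i<n. c i * g i) = 0}"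
        by (simp only: ker)
      then have "(\<Sum>i<n. ?c i * g i) = 0" by (simp only: mem_Collect_eq)
      moreover have "?c i = k j i" if "i < n" for i using that 1 by (simp add: sum_delta_mult)
      ultimately have "(\<Sum>i<n. k j i * g i) = 0" by simp
      then have "h j * f + (\<Sum>i<n. k j i * q i) * rr = 0" using comb[of "k j"] 1 by (simp add: h_def)
      moreover have "(\<Sum>i<n. k j i * q i) \<in> S" using 1 kS qS by (auto intro!: sumS mul)
      ultimately show ?thesis by blast
    next
      case 2
      have "f = (\<Sum>i<n. u i * p i) * f + (\<Sum>i<n. u i * q i) * rr" using fu comb by metis
      then have "h j * f + (- (\<Sum>i<n. u i * q i)) * rr = 0" using 2
        by (simp add: h_def algebra_simps)
      moreover have "- (\<Sum>i<n. u i * q i) \<in> S" using uS qS by (auto intro!: sumS mul neg)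
      ultimately show ?thesis by blast
    next
      case 3
      have "rr = (\<Sum>i<n. w i * p i) * f + (\<Sum>i<n. w i * q i) * rr" using rw comb by metis
      then have "h j * f + ((\<Sum>i<n. w i * q i) + - 1) * rr = 0" using 3
        by (simp add: h_def algebra_simps)
      moreover have "(\<Sum>i<n. w i * q i) + - 1 \<in> S"
        by (rule add[OF _ neg[OF one]]) (use wS qS in \<open>auto intro!: sumS mul\<close>)
      ultimately show ?thesis by blast
    qed
  qed
  have span: "\<exists>s. (\<forall>j<m+2. s j \<in> S) \<and> a = (\<Sum>j<m+2. s j * h j)"
    if aS: "a \<in> S" and "b \<in> S" and ab: "a * f + b * rr = 0" for a b
  proof -
    define c where "c i = (if i < n then a * u i + b * w i else 0)" for i
    have "(\<Sum>i<n. c i * g i) = a * (\<Sum>i<n. u i * g i) + b * (\<Sum>i<n. w i * g i)"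
      by (simp add: c_def sum_distrib_left sum.distrib algebra_simps)
    also have "\<dots> = 0" using fu rw ab by simp
    finally have "c \<in> {c :: nat \<Rightarrow> 'b. (\<forall>i<n. c i \<in> S) \<and> (\<forall>i\<ge>n. c i = 0) \<and> (\<Sum>i<n. c i * g i) = 0}"
      using aS \<open>b \<in> S\<close> uS wS by (auto simp: c_def intro!: add mul)
    then have "c \<in> {(\<lambda>i. if i < n then (\<Sum>j<m. d j * k j i) else 0) | d :: nat \<Rightarrow> 'b. \<forall>j<m. d j \<in> S}"
      by (simp only: ker)
    then obtain d where dS: "\<forall>j<m. d j \<in> S" and cd: "c = (\<lambda>i. if i < n then (\<Sum>j<m. d j * k j i) else 0)"
      by blast
    have "(\<Sum>i<n. c i * p i) = (\<Sum>i<n. (\<Sum>j<m. d j * k j i) * p i)" using cd by simp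
    also have "\<dots> = (\<Sum>j<m. d j * h j)"
      by (simp add: h_def sum_distrib_right sum_distrib_left mult.assoc) (rule sum.swap)
    finally have e1: "(\<Sum>i<n. c i * p i) = (\<Sum>j<m. d j * h j)" .
    have e2: "(\<Sum>i<n. c i * p i) = a * (\<Sum>i<n. u i * p i) + b * (\<Sum>i<n. w i * p i)"
      by (simp add: c_def sum_distrib_left sum.distrib algebra_simps)
    define s where "s j = (if j < m then d j else if j = m then a else - b)" for j
    have "(\<Sum>j<m+2. s j * h j) = (\<Sum>j<m. d j * h j) + a * h m - b * h (Suc m)"
      by (simp add: s_def)
    also have "\<dots> = a" using e1 e2 by (simp add: h_def algebra_simps)
    finally show ?thesis using dS aS \<open>b\<in>S\<close> neg by (intro exI[of _ s]) (auto simp: s_def)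
  qed
  have "(\<forall>j<m+2. h j \<in> S \<and> (\<exists>b\<in>S. h j * f + b * rr = 0)) \<and>
     (\<forall>a\<in>S. (\<exists>b\<in>S. a * f + b * rr = 0) \<longrightarrow> (\<exists>s. (\<forall>j<m+2. s j \<in> S) \<and> a = (\<Sum>j<m+2. s j * h j)))"
    using hS hI span by blast
  then show ?thesis by blast
qed




locale valu =
  fixes v :: "'a::field \<Rightarrow> ereal"
  assumes val: "is_valuation v"
begin

lemma v_zero[simp]: "v 0 = \<infinity>" using val unfolding is_valuation_def by auto
lemma v_ninf[simp]: "v x \<noteq> -\<infinity>" using val unfolding is_valuation_def by auto
lemma v_inf_iff[simp]: "v x = \<infinity> \<longleftrightarrow> x = 0" using val unfolding is_valuation_def by auto
lemma v_mult: "v (x * y) = v x + v y" using val unfolding is_valuation_def by auto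
lemma v_add: "min (v x) (v y) \<le> v (x + y)" using val unfolding is_valuation_def by auto

lemma v_fin: "x \<noteq> 0 \<Longrightarrow> v x = ereal (real_of_ereal (v x))"
  by (cases "v x") auto

lemma idem0: "(e::ereal) = e + e \<Longrightarrow> e \<noteq> \<infinity> \<Longrightarrow> e \<noteq> -\<infinity> \<Longrightarrow> e = 0"
  by (cases e) auto

lemma v_one[simp]: "v 1 = 0"
  using v_mult[of 1 1] by (intro idem0) auto

lemma v_mone: "v (-1) = 0"
  using v_mult[of "-1" "-1"] by (cases "v (-1)") auto

lemma v_neg[simp]: "v (- x) = v x"
  using v_mult[of "-1" x] v_mone by simp

lemma v_strict: assumes "v x < v y" shows "v (x + y) = v x"
proof -
  have "min (v (x + y)) (v (- y)) \<le> v (x + y + - y)" by (rule v_add)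
  then have "min (v (x + y)) (v y) \<le> v x" by simp
  then have "v (x + y) \<le> v x" using assms by (auto simp: min_def split: if_splits)
  moreover have "v x \<le> v (x + y)" using v_add[of x y] assms by (simp add: min_absorb1 less_imp_le)
  ultimately show ?thesis by simp
qed

lemma v_sum_ge: "finite A \<Longrightarrow> (\<And>i. i \<in> A \<Longrightarrow> t \<le> v (F i)) \<Longrightarrow> t \<le> v (sum F A)"
proof (induction A rule: finite_induct)
  case (insert a A)
  then have "t \<le> min (v (F a)) (v (sum F A))" by auto
  also have "\<dots> \<le> v (F a + sum F A)" by (rule v_add)
  finally show ?case using insert by simp
qed simp

lemma v_sum_gt: "finite A \<Longrightarrow> t < \<infinity> \<Longrightarrow> (\<And>i. i \<in> A \<Longrightarrow> t < v (F i)) \<Longrightarrow> t < v (sum F A)"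
proof (induction A rule: finite_induct)
  case (insert a A)
  then have "t < min (v (F a)) (v (sum F A))" by auto
  also have "\<dots> \<le> v (F a + sum F A)" by (rule v_add)
  finally show ?case using insert by simp
qed simp

abbreviation "R \<equiv> val_ring v"
abbreviation "S \<equiv> fps_ring (val_ring v)"

lemma R_add: "x \<in> R \<Longrightarrow> y \<in> R \<Longrightarrow> x + y \<in> R"
  unfolding val_ring_def using v_add[of x y] by (auto simp: min_def split: if_splits)
lemma R_mult: "x \<in> R \<Longrightarrow> y \<in> R \<Longrightarrow> x * y \<in> R"
  unfolding val_ring_def by (simp add: v_mult)
lemma R_neg: "x \<in> R \<Longrightarrow> - x \<in> R" unfolding val_ring_def by simp
lemma R_0: "0 \<in> R" and R_1: "1 \<in> R" unfolding val_ring_def by simp_all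
lemma R_sum: "finite A \<Longrightarrow> (\<And>i. i \<in> A \<Longrightarrow> F i \<in> R) \<Longrightarrow> sum F A \<in> R"
  by (induction A rule: finite_induct) (auto intro: R_add R_0)

lemma S_add: "x \<in> S \<Longrightarrow> y \<in> S \<Longrightarrow> x + y \<in> S"
  unfolding fps_ring_def by (auto intro: R_add)
lemma S_mult: "x \<in> S \<Longrightarrow> y \<in> S \<Longrightarrow> x * y \<in> S"
  unfolding fps_ring_def by (auto simp: fps_mult_nth intro!: R_sum R_mult)
lemma S_neg: "x \<in> S \<Longrightarrow> - x \<in> S"
  unfolding fps_ring_def by (auto intro: R_neg)
lemma S_0: "0 \<in> S" and S_1: "1 \<in> S" unfolding fps_ring_def using R_0 R_1 by (auto simp: fps_one_nth)
lemma S_const: "c \<in> R \<Longrightarrow> fps_const c \<in> S"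
  unfolding fps_ring_def using R_0 by auto

end




lemma least_minimizer:
  fixes \<phi> :: "nat \<Rightarrow> real"
  assumes fin: "finite {i. \<phi> i \<le> c}" and i0: "\<phi> i0 \<le> c"
  shows "\<exists>k. (\<forall>i. \<phi> k \<le> \<phi> i) \<and> (\<forall>i<k. \<phi> k < \<phi> i)"
proof -
  let ?T = "{i. \<phi> i \<le> c}"
  have ne: "\<phi> ` ?T \<noteq> {}" using i0 by auto
  have "Min (\<phi> ` ?T) \<in> \<phi> ` ?T" using fin ne by (intro Min_in) auto
  then obtain k0 where k0T: "k0 \<in> ?T" and k0: "\<phi> k0 = Min (\<phi> ` ?T)" by auto
  have P0: "\<forall>i. \<phi> k0 \<le> \<phi> i"
  proof
    fix i show "\<phi> k0 \<le> \<phi> i"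
    proof (cases "i \<in> ?T")
      case True then show ?thesis using k0 fin by (simp add: Min_le)
    next
      case False then show ?thesis using k0T by auto
    qed
  qed
  define k where "k = (LEAST k. \<forall>i. \<phi> k \<le> \<phi> i)"
  have Pk: "\<forall>i. \<phi> k \<le> \<phi> i" unfolding k_def by (rule LeastI[of _ k0]) (rule P0)
  have "\<phi> k < \<phi> i" if "i < k" for i
  proof -
    have "\<not> (\<forall>j. \<phi> i \<le> \<phi> j)" using not_less_Least[of i "\<lambda>k. \<forall>i. \<phi> k \<le> \<phi> i"] that k_def by auto
    then obtain j where "\<phi> j < \<phi> i" by (auto simp: not_le)
    then show ?thesis using Pk[rule_format, of j] by simp
  qed
  then show ?thesis using Pk by blast
qed

lemma finite_below:
  fixes \<phi> :: "nat \<Rightarrow> real"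
  assumes s: "s > 0" and ge: "\<And>i. s * real i \<le> \<phi> i"
  shows "finite {i. \<phi> i \<le> c}"
proof (rule finite_subset[of _ "{..nat \<lceil>c / s\<rceil>}"])
  show "{i. \<phi> i \<le> c} \<subseteq> {..nat \<lceil>c / s\<rceil>}"
  proof
    fix i assume "i \<in> {i. \<phi> i \<le> c}"
    then have "s * real i \<le> c" using ge[of i] by simp
    then have "real i \<le> c / s" using s by (simp add: pos_le_divide_eq mult.commute)
    then have "real i \<le> \<lceil>c / s\<rceil>" by (meson le_of_int_ceiling order_trans)
    then have "int i \<le> \<lceil>c / s\<rceil>" by linarith
    then show "i \<in> {..nat \<lceil>c / s\<rceil>}" using le_nat_iff[of "\<lceil>c / s\<rceil>" i] by auto
  qed
qed simp

context valu begin

lemma const_term_bound: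
  fixes \<alpha> \<beta> :: real and \<alpha>s :: "nat \<Rightarrow> real" and rs :: "nat \<Rightarrow> 'a" and r :: 'a and a b :: "'a fps"
  assumes rs_val: "\<forall>n. v (rs n) = ereal (\<alpha>s n)" and gt: "\<forall>n. \<alpha>s n > \<alpha>" and alpha0: "0 \<le> \<alpha>"
    and lim: "\<alpha>s \<longlonglongrightarrow> \<alpha>"
    and rv: "v r = ereal \<beta>" and aS: "a \<in> S" and bS: "b \<in> S"
    and eq: "a * Abs_fps rs + b * fps_const r = 0"
    and a0: "fps_nth a 0 \<noteq> 0"
  shows "\<beta> - \<alpha> \<le> real_of_ereal (v (fps_nth a 0))"
proof (rule ccontr)
  define \<mu> where "\<mu> = real_of_ereal (v (fps_nth a 0))"
  assume "\<not> \<beta> - \<alpha> \<le> real_of_ereal (v (fps_nth a 0))"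
  then have mu_lt: "\<mu> < \<beta> - \<alpha>" by (simp add: \<mu>_def)
  define \<epsilon> where "\<epsilon> = \<beta> - \<alpha> - \<mu>"
  have eps: "\<epsilon> > 0" using mu_lt by (simp add: \<epsilon>_def)
  obtain N where N: "\<alpha>s N < \<alpha> + \<epsilon> / 2"
  proof -
    have e2: "\<epsilon> / 2 > 0" using eps by simp
    obtain no where "\<forall>n\<ge>no. dist (\<alpha>s n) \<alpha> < \<epsilon> / 2" using lim e2 unfolding lim_sequentially by blast
    then have "dist (\<alpha>s no) \<alpha> < \<epsilon> / 2" by simp
    then have "\<alpha>s no - \<alpha> < \<epsilon> / 2" unfolding dist_real_def by (meson abs_less_iff)
    then show ?thesis using that[of no] by simp
  qed
  define s where "s = \<epsilon> / (2 * (real N + 1))"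
  have s_pos: "s > 0" using eps by (simp add: s_def)
  have sN: "s * real N < \<epsilon> / 2"
  proof -
    have "s * real N = \<epsilon> / 2 * (real N / (real N + 1))" by (simp add: s_def field_simps)
    also have "\<dots> < \<epsilon> / 2 * 1" using eps by (intro mult_strict_left_mono) auto
    finally show ?thesis by simp
  qed
  have vR: "0 \<le> v (fps_nth a i)" for i using aS unfolding fps_ring_def val_ring_def by auto
  have vbR: "0 \<le> v (fps_nth b i)" for i using bS unfolding fps_ring_def val_ring_def by auto
  define va where "va i = (if fps_nth a i = 0 then \<mu> + 1 else real_of_ereal (v (fps_nth a i)))" for i
  have va_nn: "0 \<le> va i" for i
  proof (cases "fps_nth a i = 0")
    case True
    have "0 \<le> \<mu>" using vR[of 0] by (simp add: \<mu>_def real_of_ereal_pos)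
    then show ?thesis using True by (simp add: va_def)
  next
    case False then show ?thesis using vR[of i] by (simp add: va_def real_of_ereal_pos)
  qed
  have va_v: "fps_nth a i \<noteq> 0 \<Longrightarrow> v (fps_nth a i) = ereal (va i)" for i using v_fin[of "fps_nth a i"] by (simp add: va_def)
  have va0: "va 0 = \<mu>" using a0 by (simp add: va_def \<mu>_def)
  define \<phi> where "\<phi> i = va i + s * real i" for i
  define \<psi> where "\<psi> n = \<alpha>s n + s * real n" for n
  have as_nn: "0 \<le> \<alpha>s n" for n using gt[rule_format, of n] alpha0 by linarith
  obtain k where k_min: "\<forall>i. \<phi> k \<le> \<phi> i" and k_least: "\<forall>i<k. \<phi> k < \<phi> i"
  proof -
    have "finite {i. \<phi> i \<le> \<mu>}" using s_pos by (rule finite_below) (simp add: \<phi>_def va_nn)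
    moreover have "\<phi> 0 \<le> \<mu>" by (simp add: \<phi>_def va0)
    ultimately show ?thesis using least_minimizer that by blast
  qed
  obtain n0 where n_min: "\<forall>i. \<psi> n0 \<le> \<psi> i" and n_least: "\<forall>i<n0. \<psi> n0 < \<psi> i"
  proof -
    have "finite {i. \<psi> i \<le> \<alpha>s 0}" using s_pos by (rule finite_below) (simp add: \<psi>_def as_nn)
    moreover have "\<psi> 0 \<le> \<alpha>s 0" by (simp add: \<psi>_def)
    ultimately show ?thesis using least_minimizer that by blast
  qed
  define A where "A = \<phi> k"
  define B where "B = \<psi> n0"
  have A_le: "A \<le> \<mu>" using k_min[rule_format, of 0] by (simp add: A_def \<phi>_def va0)
  have B_lt: "B < \<beta> - \<mu>"
  proof -
    have "B \<le> \<psi> N" using n_min by (simp add: B_def)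
    also have "\<dots> < \<alpha> + \<epsilon>" using N sN by (simp add: \<psi>_def)
    finally show ?thesis by (simp add: \<epsilon>_def)
  qed
  have ak: "fps_nth a k \<noteq> 0"
  proof
    assume "fps_nth a k = 0"
    then have "\<phi> k = \<mu> + 1 + s * real k" by (simp add: \<phi>_def va_def)
    moreover have "0 \<le> s * real k" using s_pos by simp
    ultimately show False using A_le by (simp add: A_def)
  qed
  define m where "m = k + n0"
  define t where "t = A + B - s * real m"
  have "0 \<le> s * real m" using s_pos by simp
  then have t_lt: "t < \<beta>" using A_le B_lt unfolding t_def by linarith
  have vT: "v (fps_nth a k * rs (m - k)) = ereal t"
    using ak va_v[of k] rs_val by (simp add: v_mult m_def t_def A_def B_def \<phi>_def \<psi>_def algebra_simps)
  have rest: "ereal t < v (\<Sum>i\<in>{0..m} - {k}. fps_nth a i * rs (m - i))"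
  proof (rule v_sum_gt)
    fix i assume i: "i \<in> {0..m} - {k}"
    show "ereal t < v (fps_nth a i * rs (m - i))"
    proof (cases "fps_nth a i = 0")
      case True then show ?thesis by simp
    next
      case False
      have im: "i \<le> m" using i by simp
      have e: "va i + \<alpha>s (m - i) = \<phi> i + \<psi> (m - i) - s * real m"
        using im by (simp add: \<phi>_def \<psi>_def of_nat_diff algebra_simps)
      have "A + B < \<phi> i + \<psi> (m - i)"
      proof (cases "i < k")
        case True
        then show ?thesis using k_least n_min unfolding A_def B_def by (meson add_less_le_mono)
      next
        case False
        then have "m - i < n0" using i by (auto simp: m_def)
        then show ?thesis using k_min n_least unfolding A_def B_def by (meson add_le_less_mono)
      qed
      then have "t < va i + \<alpha>s (m - i)" using e by (simp add: t_def)
      then show ?thesis using False va_v[of i] rs_val by (simp add: v_mult)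
    qed
  qed simp_all
  have "fps_nth (a * Abs_fps rs) m = (\<Sum>i\<in>{0..m}. fps_nth a i * rs (m - i))" by (simp add: fps_mult_nth)
  also have "\<dots> = fps_nth a k * rs (m - k) + (\<Sum>i\<in>{0..m} - {k}. fps_nth a i * rs (m - i))"
    by (rule sum.remove) (auto simp: m_def)
  finally have c1: "v (fps_nth (a * Abs_fps rs) m) = ereal t"
    using v_strict[of "fps_nth a k * rs (m - k)"] rest vT by simp
  have "fps_nth (a * Abs_fps rs) m = - (fps_nth b m * r)"
    using arg_cong[OF eq, of "\<lambda>x. fps_nth x m"] by (simp add: eq_neg_iff_add_eq_0)
  then have "v (fps_nth (a * Abs_fps rs) m) = v (fps_nth b m) + ereal \<beta>" by (simp add: v_mult rv)
  moreover have "ereal \<beta> \<le> v (fps_nth b m) + ereal \<beta>" using vbR[of m] by (metis add.commute add_increasing2 order.refl) 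
  ultimately have "ereal \<beta> \<le> ereal t" using c1 by simp
  then show False using t_lt by simp
qed

end



theorem theoremB:
  fixes v :: "'a::field \<Rightarrow> ereal"
    and \<alpha> :: real and \<alpha>s :: "nat \<Rightarrow> real" and rs :: "nat \<Rightarrow> 'a" and r :: 'a
  assumes val: "is_valuation v"
    and dense: "dense_in_reals (value_group v)"
    and proper: "value_group v \<noteq> UNIV"
    and alpha_nonneg: "0 \<le> \<alpha>"
    and alpha_notin: "\<forall>x\<in>val_ring v. x \<noteq> 0 \<longrightarrow> v x \<noteq> ereal \<alpha>"
    and alphas_in: "\<forall>n. \<exists>x\<in>val_ring v. x \<noteq> 0 \<and> v x = ereal (\<alpha>s n)"
    and alphas_mono: "\<forall>n. \<alpha>s n \<ge> \<alpha>s (Suc n) \<and> \<alpha>s (Suc n) > \<alpha>"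
    and alphas_lim: "\<alpha>s \<longlonglongrightarrow> \<alpha>"
    and rs_R: "\<forall>n. rs n \<in> val_ring v"
    and rs_val: "\<forall>n. v (rs n) = ereal (\<alpha>s n)"
    and r_R: "r \<in> val_ring v"
    and r_nz: "r \<noteq> 0"
    and r_val: "v r > ereal \<alpha>"
  shows "\<not> finitely_presented_ideal (fps_ring (val_ring v))
            {g * Abs_fps rs + h * fps_const r | g h.
               g \<in> fps_ring (val_ring v) \<and> h \<in> fps_ring (val_ring v)}
         \<and> \<not> coherent_ring (fps_ring (val_ring v))"
proof -
  interpret valu v by unfold_locales (rule val)
  define f where "f = Abs_fps rs"
  define rr where "rr = fps_const r"
  define \<beta> where "\<beta> = real_of_ereal (v r)"
  have rv: "v r = ereal \<beta>" using v_fin[OF r_nz] by (simp add: \<beta>_def)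
  have ab: "\<alpha> < \<beta>" using r_val rv by simp
  have gt: "\<forall>n. \<alpha>s n > \<alpha>"
  proof
    fix n show "\<alpha>s n > \<alpha>" using alphas_mono[rule_format, of n] by linarith
  qed
  have fS: "f \<in> S" using rs_R by (simp add: f_def fps_ring_def)
  have rS: "rr \<in> S" using r_R by (simp add: rr_def S_const)
  have notba: "real_of_ereal (v c) \<noteq> \<beta> - \<alpha>" if "c \<noteq> 0" for c
  proof
    assume h: "real_of_ereal (v c) = \<beta> - \<alpha>"
    define x where "x = r / c"
    have "r = x * c" using that by (simp add: x_def)
    then have e: "v r = v x + v c" by (simp add: v_mult)
    have xnz: "x \<noteq> 0" using that r_nz by (simp add: x_def)
    have "v x = ereal \<alpha>"
      using e rv v_fin[OF xnz] v_fin[OF that] h by (cases "v x") auto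
    moreover have "x \<in> R" using \<open>v x = ereal \<alpha>\<close> alpha_nonneg by (simp add: val_ring_def)
    ultimately show False using alpha_notin xnz by blast
  qed
  let ?J = "{g * Abs_fps rs + h * fps_const r | g h. g \<in> S \<and> h \<in> S}"
  have J: "?J = {x * f + y * rr | x y. x \<in> S \<and> y \<in> S}" by (simp add: f_def rr_def)
  have nfp: "\<not> finitely_presented_ideal S ?J"
  proof
    assume "finitely_presented_ideal S ?J"
    then have "finitely_presented_ideal S {x * f + y * rr | x y. x \<in> S \<and> y \<in> S}" using J by simp
    then obtain M :: nat and h where hI: "\<forall>j<M. h j \<in> S \<and> (\<exists>b\<in>S. h j * f + b * rr = 0)"
      and span: "\<forall>a\<in>S. (\<exists>b\<in>S. a * f + b * rr = 0) \<longrightarrow> (\<exists>s. (\<forall>j<M. s j \<in> S) \<and> a = (\<Sum>j<M. s j * h j))"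
      using schanuel_aux[OF S_add S_mult S_neg S_0 S_1 fS rS] by blast
    have h0: "\<beta> - \<alpha> < real_of_ereal (v (fps_nth (h j) 0))" if jh: "j < M" "fps_nth (h j) 0 \<noteq> 0" for j
    proof -
      obtain b where "b \<in> S" "h j * f + b * rr = 0" "h j \<in> S" using hI jh by blast
      then have "\<beta> - \<alpha> \<le> real_of_ereal (v (fps_nth (h j) 0))"
        using const_term_bound[OF rs_val gt alpha_nonneg alphas_lim rv] jh by (simp add: f_def rr_def)
      then show ?thesis using notba[OF jh(2)] by linarith
    qed
    define G where "G = insert (\<beta> - \<alpha> + 1) ((\<lambda>j. real_of_ereal (v (fps_nth (h j) 0))) ` {j. j < M \<and> fps_nth (h j) 0 \<noteq> 0})"
    have Gfin: "finite G" unfolding G_def by simp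
    define \<gamma> where "\<gamma> = Min G"
    have \<gamma>_in: "\<gamma> \<in> G" using Gfin unfolding \<gamma>_def by (intro Min_in) (auto simp: G_def)
    have \<gamma>_gt: "\<beta> - \<alpha> < \<gamma>" using \<gamma>_in h0 unfolding G_def by auto
    obtain g where gG: "g \<in> value_group v" and g1: "\<beta> - \<alpha> < g" and g2: "g < \<gamma>"
      using dense \<gamma>_gt unfolding dense_in_reals_def by blast
    obtain x where xnz: "x \<noteq> 0" and gx: "g = real_of_ereal (v x)" using gG unfolding value_group_def by blast
    have vx: "v x = ereal g" using v_fin[OF xnz] gx by simp
    have xR: "x \<in> R" using vx g1 ab by (simp add: val_ring_def)
    define b where "b = Abs_fps (\<lambda>n. - (x * rs n / r))"
    have bS: "b \<in> S"
      unfolding fps_ring_def b_def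
    proof (intro CollectI allI, simp only: fps_nth_Abs_fps)
      fix n
      show "- (x * rs n / r) \<in> R"
      proof (rule R_neg)
        define z where "z = x * rs n / r"
        have rsnz: "rs n \<noteq> 0" using rs_val[rule_format, of n] by (auto simp del: v_inf_iff simp: v_inf_iff[symmetric])
        have znz: "z \<noteq> 0" using xnz rsnz r_nz by (simp add: z_def)
        have "z * r = x * rs n" using r_nz by (simp add: z_def)
        then have "v (z * r) = v (x * rs n)" by simp
        then have "v z + v r = v x + v (rs n)" by (simp only: v_mult)
        then have "v z + ereal \<beta> = ereal (g + \<alpha>s n)" using vx rs_val rv by simp
        then have "real_of_ereal (v z) + \<beta> = g + \<alpha>s n" using v_fin[OF znz] by (cases "v z") auto
        moreover have "\<alpha>s n > \<alpha>" using gt by simp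
        ultimately have "real_of_ereal (v z) \<ge> 0" using g1 by linarith
        then have "0 \<le> v z" using v_fin[OF znz] by (metis ereal_less_eq(3) zero_ereal_def)
        then show "z \<in> R" by (simp add: val_ring_def)
      qed
    qed
    have "fps_const x * f + b * rr = 0"
      by (rule fps_ext) (use r_nz in \<open>simp add: f_def rr_def b_def\<close>)
    then obtain s where sS: "\<forall>j<M. s j \<in> S" and xs: "fps_const x = (\<Sum>j<M. s j * h j)"
      using span S_const[OF xR] bS by blast
    have "x = fps_nth (fps_const x) 0" by simp
    also have "\<dots> = (\<Sum>j<M. fps_nth (s j) 0 * fps_nth (h j) 0)" by (simp add: xs fps_sum_nth)
    finally have xsum: "x = (\<Sum>j<M. fps_nth (s j) 0 * fps_nth (h j) 0)" .
    have "ereal \<gamma> \<le> v (\<Sum>j<M. fps_nth (s j) 0 * fps_nth (h j) 0)"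
    proof (rule v_sum_ge)
      fix j assume j: "j \<in> {..<M}"
      show "ereal \<gamma> \<le> v (fps_nth (s j) 0 * fps_nth (h j) 0)"
      proof (cases "fps_nth (h j) 0 = 0")
        case True then show ?thesis by simp
      next
        case False
        have "real_of_ereal (v (fps_nth (h j) 0)) \<in> G" using j False by (auto simp: G_def)
        then have "\<gamma> \<le> real_of_ereal (v (fps_nth (h j) 0))" using Gfin by (simp add: \<gamma>_def)
        then have c1: "ereal \<gamma> \<le> v (fps_nth (h j) 0)" using v_fin[OF False] by (metis ereal_less_eq(3))
        have "0 \<le> v (fps_nth (s j) 0)" using sS j by (auto simp: fps_ring_def val_ring_def)
        then have "v (fps_nth (h j) 0) \<le> v (fps_nth (s j) 0) + v (fps_nth (h j) 0)"
          by (metis add.commute add_increasing2 order.refl)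
        then show ?thesis using c1 by (simp add: v_mult)
      qed
    qed simp
    then have "ereal \<gamma> \<le> ereal g" using xsum vx by simp
    then show False using g2 by simp
  qed
  moreover have "\<not> coherent_ring S"
  proof
    assume coh: "coherent_ring S"
    define gg where "gg = (\<lambda>i::nat. if i = 0 then f else rr)"
    have "?J = span_in S 2 gg"
    proof
      show "?J \<subseteq> span_in S 2 gg"
      proof
        fix z assume "z \<in> ?J"
        then obtain x y where "x \<in> S" "y \<in> S" "z = x * f + y * rr" using J by blast
        then show "z \<in> span_in S 2 gg" unfolding span_in_def
          by (intro CollectI exI[of _ "\<lambda>i. if i = 0 then x else y"])
             (auto simp: gg_def numeral_2_eq_2 lessThan_Suc)
      qed
      show "span_in S 2 gg \<subseteq> ?J"
      proof
        fix z assume "z \<in> span_in S 2 gg"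
        then obtain c where c: "\<forall>i<2. c i \<in> S" "z = (\<Sum>i<2. c i * gg i)" unfolding span_in_def by blast
        then have "z = c 0 * f + c 1 * rr" by (simp add: gg_def numeral_2_eq_2 lessThan_Suc)
        moreover have "c 0 \<in> S" "c 1 \<in> S" using c by auto
        ultimately show "z \<in> ?J" unfolding J by blast
      qed
    qed
    moreover have "\<forall>i<2. gg i \<in> S" using fS rS by (simp add: gg_def)
    ultimately have "fin_gen_ideal S ?J" unfolding fin_gen_ideal_def by blast
    then show False using coh nfp unfolding coherent_ring_def by blast
  qed
  ultimately show ?thesis by simp
qed


end
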